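(* For every finite permutation group $G$, $\mathrm{RC}(G)\le \mathrm{H}(G)+1$.
   Context: Let $G$ act on a finite set $\Omega$. A subset $\Lambda\subseteq\Omega$ is independent if its pointwise stabilizer $G_{(\Lambda)}$ differs from $G_{(\Lambda')}$ for every proper subset $\Lambda'\subsetneq\Lambda$; $\mathrm{H}(G)$ is the maximum size of an independent set. For $r\le n$ and $I,J\in\Omega^n$, write $I\sim_r J$ if for every choice of indices $k_1,\dots,k_r\in\{1,\dots,n\}$ there is $h\in G$ with $I_{k_i}^h=J_{k_i}$ for $i=1,\dots,r$. $\mathrm{RC}(G)$ is the least $r$ such that for all $n\ge r$ and all $I,J\in\Omega^n$, $I\sim_r J$ implies $I\sim_n J$. *)

theory Defs
  imports "HOL-Algebra.Bij"
begin

text \<open>A permutation group on the finite set Omega is a subgroup G of BijGroup Omega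
  (bijections of Omega, extensional outside Omega); g acts on points by application.\<close>

definition pw_stab :: "('a \<Rightarrow> 'a) set \<Rightarrow> 'a set \<Rightarrow> ('a \<Rightarrow> 'a) set" where
  "pw_stab G L = {g \<in> G. \<forall>x\<in>L. g x = x}"

definition independent :: "'a set \<Rightarrow> ('a \<Rightarrow> 'a) set \<Rightarrow> 'a set \<Rightarrow> bool" where
  "independent Omega G L \<longleftrightarrow> L \<subseteq> Omega \<and> (\<forall>L'. L' \<subset> L \<longrightarrow> pw_stab G L' \<noteq> pw_stab G L)"

definition height :: "'a set \<Rightarrow> ('a \<Rightarrow> 'a) set \<Rightarrow> nat" where
  "height Omega G = Max {card L | L. independent Omega G L}"

text \<open>Tuples in Omega^n are lists of length n with entries in Omega; indices are 0-based.
  rel_equiv G r I J: for every choice of r indices k_1..k_r (repetitions allowed)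
  some h in G maps I_(k_i) to J_(k_i) for all i.\<close>

definition rel_equiv :: "('a \<Rightarrow> 'a) set \<Rightarrow> nat \<Rightarrow> 'a list \<Rightarrow> 'a list \<Rightarrow> bool" where
  "rel_equiv G r I J \<longleftrightarrow>
     (\<forall>ks. length ks = r \<and> (\<forall>i<r. ks ! i < length I) \<longrightarrow>
        (\<exists>h\<in>G. \<forall>i<r. h (I ! (ks ! i)) = J ! (ks ! i)))"

definition rc :: "'a set \<Rightarrow> ('a \<Rightarrow> 'a) set \<Rightarrow> nat" where
  "rc Omega G = (LEAST r. \<forall>n\<ge>r. \<forall>I J. length I = n \<and> length J = n \<and>
       set I \<subseteq> Omega \<and> set J \<subseteq> Omega \<longrightarrow> rel_equiv G r I J \<longrightarrow> rel_equiv G n I J)"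

end

theory Submission
  imports Defs
begin

lemma rel_equiv_set:
  assumes "rel_equiv G r I J" "finite S" "S \<noteq> {}" "card S \<le> r" "\<forall>j\<in>S. j < length I"
  shows "\<exists>h\<in>G. \<forall>j\<in>S. h (I ! j) = J ! j"
proof -
  obtain k where k: "k \<in> S" using assms(3) by blast
  define xs where "xs = sorted_list_of_set S"
  define ks where "ks = xs @ replicate (r - length xs) k"
  have lxs: "length xs = card S" "set xs = S" using assms(2) by (auto simp: xs_def)
  have lks: "length ks = r" using lxs assms(4) by (simp add: ks_def)
  have sks: "set ks \<subseteq> S" using k lxs by (auto simp: ks_def)
  have "\<forall>i<r. ks ! i < length I" using sks assms(5) lks nth_mem by (metis subsetD)
  then obtain h where h: "h \<in> G" "\<forall>i<r. h (I ! (ks ! i)) = J ! (ks ! i)"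
    using assms(1) lks unfolding rel_equiv_def by blast
  have "S \<subseteq> set ks" using lxs by (auto simp: ks_def)
  have "\<forall>j\<in>S. h (I ! j) = J ! j"
  proof
    fix j assume "j \<in> S"
    then have "j \<in> set ks" using \<open>S \<subseteq> set ks\<close> by blast
    then obtain i where "i < length ks" "ks ! i = j" by (metis in_set_conv_nth)
    then show "h (I ! j) = J ! j" using h lks by auto
  qed
  then show ?thesis using h by blast
qed

theorem lemma2p1:
  fixes Omega :: "'a set" and G :: "('a \<Rightarrow> 'a) set"
  assumes "finite Omega"
    and "subgroup G (BijGroup Omega)"
  shows "rc Omega G \<le> height Omega G + 1"
proof -
  let ?H = "height Omega G"
  have grp: "group (BijGroup Omega)" by (rule group_BijGroup)
  have fin: "finite {card L | L. independent Omega G L}"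
  proof -
    have "{card L | L. independent Omega G L} \<subseteq> card ` Pow Omega"
      by (auto simp: independent_def)
    then show ?thesis using assms(1) finite_subset by blast
  qed
  have Gsub: "G \<subseteq> Bij Omega" using assms(2) subgroup.subset by (force simp: BijGroup_def)
  have main: "rel_equiv G n I J"
    if n: "n \<ge> ?H + 1" "length I = n" "length J = n" "set I \<subseteq> Omega" "set J \<subseteq> Omega"
      and rel: "rel_equiv G (?H + 1) I J" for n I J
  proof -
    let ?S = "{B. B \<subseteq> set I \<and> pw_stab G B = pw_stab G (set I)}"
    obtain B where B: "B \<in> ?S" "\<forall>C. C \<in> ?S \<longrightarrow> card B \<le> card C"
      using ex_has_least_nat[of "\<lambda>B. B \<in> ?S" "set I" card] by blast
    have finB: "finite B" using B(1) finite_subset by blast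
    have indep: "independent Omega G B"
      unfolding independent_def
    proof (intro conjI allI impI)
      show "B \<subseteq> Omega" using B(1) n(4) by blast
    next
      fix C assume "C \<subset> B"
      then have "card C < card B" using finB psubset_card_mono by blast
      have "C \<notin> ?S"
      proof
        assume "C \<in> ?S"
        then have "card B \<le> card C" using B(2) by blast
        then show False using \<open>card C < card B\<close> by simp
      qed
      then show "pw_stab G C \<noteq> pw_stab G B" using B(1) \<open>C \<subset> B\<close> by auto
    qed
    have cardB: "card B \<le> ?H" unfolding height_def using fin indep by (auto intro: Max_ge)
    have "\<forall>b\<in>B. \<exists>j. j < n \<and> I ! j = b" using B(1) n(2) by (auto simp: in_set_conv_nth)
    then obtain idx where idx: "\<forall>b\<in>B. idx b < n \<and> I ! (idx b) = b" by metis
    define K where "K = idx ` B"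
    have finK: "finite K" "card K \<le> card B" using finB by (auto simp: K_def card_image_le)
    have Kn: "\<forall>j\<in>K. j < n" using idx by (auto simp: K_def)
    have hk: "\<exists>h\<in>G. \<forall>j\<in>insert k K. h (I ! j) = J ! j" if "k < n" for k
    proof (rule rel_equiv_set[OF rel])
      show "card (insert k K) \<le> ?H + 1"
      proof -
        have "card (insert k K) \<le> Suc (card K)" by (simp add: card_insert_if finK)
        then show ?thesis using finK(2) cardB by linarith
      qed
    qed (use finK Kn that n(2) in auto)
    have n0: "0 < n" using n(1) by simp
    obtain h0 where h0: "h0 \<in> G" "\<forall>j\<in>insert 0 K. h0 (I ! j) = J ! j" using hk[OF n0] by blast
    have good: "h0 (I ! k) = J ! k" if kn: "k < n" for k
    proof -
      obtain hk' where hk': "hk' \<in> G" "\<forall>j\<in>insert k K. hk' (I ! j) = J ! j" using hk[OF kn] by blast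
      let ?BG = "BijGroup Omega"
      have h0B: "h0 \<in> carrier ?BG" and hkB: "hk' \<in> carrier ?BG"
        using h0 hk' Gsub by (auto simp: BijGroup_def)
      define g where "g = inv\<^bsub>?BG\<^esub> h0 \<otimes>\<^bsub>?BG\<^esub> hk'"
      have ginvB: "inv\<^bsub>?BG\<^esub> h0 \<in> carrier ?BG" using grp h0B by (simp add: group.inv_closed)
      have gG: "g \<in> G" unfolding g_def
        using assms(2) h0 hk' subgroup.m_closed subgroup.m_inv_closed by metis
      have mult_eval: "(x \<otimes>\<^bsub>?BG\<^esub> y) z = x (y z)" if "x \<in> carrier ?BG" "y \<in> carrier ?BG" "z \<in> Omega" for x y z
        using that by (simp add: BijGroup_def compose_def)
      have hkOm: "hk' z \<in> Omega" if "z \<in> Omega" for z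
        using hkB that Bij_imp_funcset by (fastforce simp: BijGroup_def)
      have h0Om: "h0 z \<in> Omega" if "z \<in> Omega" for z
        using h0B that Bij_imp_funcset by (fastforce simp: BijGroup_def)
      have invl: "(inv\<^bsub>?BG\<^esub> h0) (h0 z) = z" if "z \<in> Omega" for z
      proof -
        have "(inv\<^bsub>?BG\<^esub> h0 \<otimes>\<^bsub>?BG\<^esub> h0) z = z"
          using group.l_inv[OF grp h0B] that by (simp add: BijGroup_def)
        then show ?thesis using mult_eval[OF ginvB h0B that] by simp
      qed
      have "g \<in> pw_stab G B"
        unfolding pw_stab_def
      proof (intro CollectI conjI ballI gG)
        fix b assume "b \<in> B"
        then have bO: "b \<in> Omega" and "idx b \<in> K" "I ! idx b = b" using idx B(1) n(4) by (auto simp: K_def)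
        then have "hk' b = h0 b" using hk'(2) h0(2) by force
        then show "g b = b" unfolding g_def using mult_eval[OF ginvB hkB bO] invl[OF bO] by simp
      qed
      then have "g \<in> pw_stab G (set I)" using B(1) by simp
      moreover have Ik: "I ! k \<in> set I" using kn n(2) by simp
      ultimately have gI: "g (I ! k) = I ! k" by (simp add: pw_stab_def)
      have IkO: "I ! k \<in> Omega" using Ik n(4) by blast
      have gB: "g \<in> carrier ?BG" using monoid.m_closed[OF group.is_monoid[OF grp] ginvB hkB] by (simp add: g_def)
      have "h0 \<otimes>\<^bsub>?BG\<^esub> g = hk'" unfolding g_def
        using monoid.m_assoc[OF group.is_monoid[OF grp] h0B ginvB hkB, symmetric]
          group.r_inv[OF grp h0B] monoid.l_one[OF group.is_monoid[OF grp] hkB] by simp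
      then have "h0 (g (I ! k)) = hk' (I ! k)" using mult_eval[OF h0B gB IkO] by simp
      then show ?thesis using gI hk'(2) by simp
    qed
    show ?thesis unfolding rel_equiv_def
    proof (intro allI impI)
      fix ks :: "nat list" assume "length ks = n \<and> (\<forall>i<n. ks ! i < length I)"
      then have "\<forall>i<n. h0 (I ! (ks ! i)) = J ! (ks ! i)" using good n(2) by simp
      then show "\<exists>h\<in>G. \<forall>i<n. h (I ! (ks ! i)) = J ! (ks ! i)" using h0(1) by blast
    qed
  qed
  show ?thesis unfolding rc_def
  proof (rule Least_le, intro allI impI)
    fix n I J assume "height Omega G + 1 \<le> n" and "length I = n \<and> length J = n \<and> set I \<subseteq> Omega \<and> set J \<subseteq> Omega"
      and "rel_equiv G (height Omega G + 1) I J"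
    then show "rel_equiv G n I J" using main by blast
  qed
qed

end
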